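(* Let $T>0$ and let $\theta=(W,V)\colon[0,T)\to\mathbb{R}^D$ be any solution of the differential inclusion $\dot\theta(t)\in-\partial\mathcal{L}(\theta(t))$ for a.e. $t\in[0,T)$. Set $\bar{\mathcal{L}}(t)=\int_0^t\sqrt{\mathcal{L}(\theta(s))}\,ds$. Then for every $t\in[0,T)$, $$\|\theta(t)-\theta(0)\|\le\sqrt2\|X\|_{op}\big(\|W(0)\|_F+\|V(0)\|_F\big)\bar{\mathcal{L}}(t)\exp\big(\sqrt2\|X\|_{op}\bar{\mathcal{L}}(t)\big),$$ and $$\|X\|_{op}\|W(t)-W(0)\|_F\le\frac12\Big(c_1\bar{\mathcal{L}}(t)+c_2\bar{\mathcal{L}}(t)^2\Big)\exp\big(c\,\bar{\mathcal{L}}(t)^2\big),$$ where $c_1=2\sqrt2\|X\|_{op}^2\|V(0)\|_F$, $c_2=2\|X\|_{op}^3\|W(0)\|_F$, $c=\|X\|_{op}^2$.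
   Context: Fixed $X\in\mathbb{R}^{N\times d_0}$, $Y\in\mathbb{R}^{N\times d_2}$. Parameters $\theta=(W,V)$, $W\in\mathbb{R}^{d_0\times d_1}$, $V\in\mathbb{R}^{d_1\times d_2}$, identified with a vector in $\mathbb{R}^D$, $D=d_0d_1+d_1d_2$, with $\|\theta\|$ the Euclidean norm of this vector. $\phi(x)=\max(x,0)$ entrywise, $\hat Y=\phi(XW)V$, $\mathcal{L}(\theta)=\frac12\|Y-\hat Y\|_F^2$. $\partial$ is the Clarke subdifferential; solutions are absolutely continuous curves. $\|\cdot\|_{op}$, $\|\cdot\|_F$ are operator and Frobenius norms. *)

theory Defs
  imports "HOL-Analysis.Analysis"
begin

definition abs_continuous_on :: "real \<Rightarrow> real \<Rightarrow> (real \<Rightarrow> 'a::real_normed_vector) \<Rightarrow> bool" where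
  "abs_continuous_on a b f \<longleftrightarrow>
     (\<forall>e>0. \<exists>d>0. \<forall>(n::nat) (u::nat \<Rightarrow> real) (v::nat \<Rightarrow> real).
        (\<forall>i<n. a \<le> u i \<and> u i \<le> v i \<and> v i \<le> b) \<and>
        (\<forall>i<n. \<forall>j<n. i \<noteq> j \<longrightarrow> v i \<le> u j \<or> v j \<le> u i) \<and>
        (\<Sum>i<n. v i - u i) < d
        \<longrightarrow> (\<Sum>i<n. norm (f (v i) - f (u i))) < e)"

definition clarke_dir :: "('a::real_inner \<Rightarrow> real) \<Rightarrow> 'a \<Rightarrow> 'a \<Rightarrow> ereal" where
  "clarke_dir f x v =
     Limsup (at (x, 0) within (UNIV \<times> {0<..})) (\<lambda>(y, t). ereal ((f (y + t *\<^sub>R v) - f y) / t))"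

definition clarke_subdiff :: "('a::real_inner \<Rightarrow> real) \<Rightarrow> 'a \<Rightarrow> 'a set" where
  "clarke_subdiff f x = {\<xi>. \<forall>v. ereal (\<xi> \<bullet> v) \<le> clarke_dir f x v}"

definition relu_mat :: "real^'m^'n \<Rightarrow> real^'m^'n" where
  "relu_mat A = (\<chi> i j. max (A $ i $ j) 0)"

text \<open>Loss of the two-layer ReLU network; the norm on real^'m^'n is the Frobenius norm.\<close>
definition loss :: "real^'d0^'n \<Rightarrow> real^'d2^'n \<Rightarrow> (real^'d1^'d0) \<times> (real^'d2^'d1) \<Rightarrow> real" where
  "loss X Y \<theta> = (1/2) * (norm (Y - relu_mat (X ** fst \<theta>) ** snd \<theta>))\<^sup>2"

definition opnorm :: "real^'m^'n \<Rightarrow> real" where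
  "opnorm A = onorm (\<lambda>x. A *v x)"

end

theory Submission
  imports Defs
begin



lemma norm_mat_sq: "(norm (A::real^'m^'n))\<^sup>2 = (\<Sum>i\<in>UNIV. \<Sum>j\<in>UNIV. (A$i$j)\<^sup>2)"
  by (simp add: norm_vec_def L2_set_def sum_nonneg real_norm_def)

lemma norm_mat_sq_col: "(norm (A::real^'m^'n))\<^sup>2 = (\<Sum>j\<in>UNIV. (norm (column j A))\<^sup>2)"
proof -
  have "(norm A)\<^sup>2 = (\<Sum>i\<in>UNIV. \<Sum>j\<in>UNIV. (A$i$j)\<^sup>2)" by (rule norm_mat_sq)
  also have "\<dots> = (\<Sum>j\<in>UNIV. \<Sum>i\<in>UNIV. (A$i$j)\<^sup>2)" by (rule sum.swap)
  also have "\<dots> = (\<Sum>j\<in>UNIV. (norm (column j A))\<^sup>2)"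
    by (simp add: norm_vec_def L2_set_def sum_nonneg column_def)
  finally show ?thesis .
qed

lemma norm_mat_sq_row: "(norm (A::real^'m^'n))\<^sup>2 = (\<Sum>i\<in>UNIV. (norm (A$i))\<^sup>2)"
  by (simp add: norm_vec_def L2_set_def sum_nonneg)

lemma matmul_entry: "(A ** B) $ i $ j = (A $ i) \<bullet> column j (B::real^'k^'m)"
  for A :: "real^'m^'n"
  by (simp add: matrix_matrix_mult_def inner_vec_def column_def mult.commute)

lemma norm_matmul: "norm ((A::real^'m^'n) ** (B::real^'k^'m)) \<le> norm A * norm B"
proof -
  have "(norm (A ** B))\<^sup>2 = (\<Sum>i\<in>UNIV. \<Sum>j\<in>UNIV. ((A $ i) \<bullet> column j B)\<^sup>2)"
    by (simp add: norm_mat_sq matmul_entry)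
  also have "\<dots> \<le> (\<Sum>i\<in>UNIV. \<Sum>j\<in>UNIV. (norm (A $ i))\<^sup>2 * (norm (column j B))\<^sup>2)"
  proof (intro sum_mono)
    fix i j
    have "\<bar>(A $ i) \<bullet> column j B\<bar> \<le> norm (A $ i) * norm (column j B)"
      by (rule Cauchy_Schwarz_ineq2)
    then have "\<bar>(A $ i) \<bullet> column j B\<bar>\<^sup>2 \<le> (norm (A $ i) * norm (column j B))\<^sup>2"
      by (intro power_mono) auto
    then show "((A $ i) \<bullet> column j B)\<^sup>2 \<le> (norm (A $ i))\<^sup>2 * (norm (column j B))\<^sup>2"
      by (simp add: power_mult_distrib)
  qed
  also have "\<dots> = (\<Sum>i\<in>UNIV. (norm (A $ i))\<^sup>2) * (\<Sum>j\<in>UNIV. (norm (column j B))\<^sup>2)"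
    by (rule sum_product[symmetric])
  also have "\<dots> = (norm A * norm B)\<^sup>2"
    by (simp only: norm_mat_sq_row[symmetric] norm_mat_sq_col[symmetric] power_mult_distrib)
  finally show ?thesis
    by (rule power2_le_imp_le) simp
qed

lemma column_matmul: "column j (A ** B) = A *v column j B"
  by (simp add: vec_eq_iff column_def matrix_matrix_mult_def matrix_vector_mult_def)

lemma opnorm_nonneg: "0 \<le> opnorm X"
  unfolding opnorm_def by (rule onorm_pos_le) simp

lemma norm_opmul: "norm ((X::real^'m^'n) ** (D::real^'k^'m)) \<le> opnorm X * norm D"
proof -
  have "(norm (X ** D))\<^sup>2 = (\<Sum>j\<in>UNIV. (norm (X *v column j D))\<^sup>2)"
    by (subst norm_mat_sq_col) (simp add: column_matmul)
  also have "\<dots> \<le> (\<Sum>j\<in>UNIV. (opnorm X)\<^sup>2 * (norm (column j D))\<^sup>2)"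
  proof (intro sum_mono)
    fix j
    have "norm (X *v column j D) \<le> opnorm X * norm (column j D)"
      unfolding opnorm_def by (rule onorm) simp
    then show "(norm (X *v column j D))\<^sup>2 \<le> (opnorm X)\<^sup>2 * (norm (column j D))\<^sup>2"
      by (metis norm_ge_zero power_mono power_mult_distrib)
  qed
  also have "\<dots> = (opnorm X)\<^sup>2 * (\<Sum>j\<in>UNIV. (norm (column j D))\<^sup>2)"
    by (rule sum_distrib_left[symmetric])
  also have "\<dots> = (opnorm X * norm D)\<^sup>2"
    using norm_mat_sq_col[of D] by (simp add: power_mult_distrib)
  finally have "(norm (X ** D))\<^sup>2 \<le> (opnorm X * norm D)\<^sup>2" .
  moreover have "0 \<le> opnorm X * norm D" using opnorm_nonneg[of X] by simp
  ultimately show ?thesis by (rule power2_le_imp_le)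
qed

lemma max0_lip: "(max (a::real) 0 - max b 0)\<^sup>2 \<le> (a - b)\<^sup>2"
proof -
  have "\<bar>max a 0 - max b 0\<bar> \<le> \<bar>a - b\<bar>" by linarith
  then show ?thesis by (metis abs_le_square_iff)
qed
lemma relu_lip: "norm (relu_mat A - relu_mat B) \<le> norm (A - B)"
proof -
  have "(norm (relu_mat A - relu_mat B))\<^sup>2 \<le> (norm (A - B))\<^sup>2"
    unfolding norm_mat_sq relu_mat_def
    by (intro sum_mono) (simp add: max0_lip)
  then show ?thesis by (rule power2_le_imp_le) simp
qed
lemma relu_zero: "relu_mat 0 = 0"
  by (simp add: relu_mat_def vec_eq_iff)

lemma relu_le: "norm (relu_mat A) \<le> norm A"
  using relu_lip[of A 0] by (simp add: relu_zero)

lemma matmul_scaleR_left: "((r::real) *\<^sub>R A) ** B = r *\<^sub>R (A ** (B::real^'k^'m))" for A :: "real^'m^'n"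
  by (simp add: vec_eq_iff matrix_matrix_mult_def sum_distrib_left mult.assoc)

lemma matmul_scaleR_right: "A ** ((r::real) *\<^sub>R B) = r *\<^sub>R (A ** (B::real^'k^'m))" for A :: "real^'m^'n"
  by (simp add: vec_eq_iff matrix_matrix_mult_def sum_distrib_left mult.left_commute)

lemma bb_matmul: "bounded_bilinear (\<lambda>(A::real^'m^'n) (B::real^'k^'m). A ** B)"
proof
  fix a a' :: "real^'m^'n" and b b' :: "real^'k^'m" and r :: real
  show "(a + a') ** b = a ** b + a' ** b"
    by (simp add: vec_eq_iff matrix_matrix_mult_def sum.distrib[symmetric] distrib_right)
  show "a ** (b + b') = a ** b + a ** b'" by (rule matrix_add_ldistrib)
  show "(r *\<^sub>R a) ** b = r *\<^sub>R (a ** b)" by (rule matmul_scaleR_left)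
  show "a ** (r *\<^sub>R b) = r *\<^sub>R (a ** b)" by (rule matmul_scaleR_right)
next
  show "\<exists>K. \<forall>a b. norm ((a::real^'m^'n) ** (b::real^'k^'m)) \<le> norm a * norm b * K"
    by (rule exI[of _ 1]) (simp add: norm_matmul)
qed

lemma tendsto_relu: "(f \<longlongrightarrow> l) F \<Longrightarrow> ((\<lambda>x. relu_mat (f x)) \<longlongrightarrow> relu_mat l) F"
proof -
  assume f: "(f \<longlongrightarrow> l) F"
  have "((\<lambda>x. f x - l) \<longlongrightarrow> 0) F" using f by (rule LIM_zero)
  moreover have "\<forall>\<^sub>F x in F. norm (relu_mat (f x) - relu_mat l) \<le> norm (f x - l) * 1"
    by (simp add: relu_lip)
  ultimately have "((\<lambda>x. relu_mat (f x) - relu_mat l) \<longlongrightarrow> 0) F" by (rule tendsto_0_le)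
  then show ?thesis by (rule LIM_zero_cancel)
qed

definition Rf :: "real^'d0^'n \<Rightarrow> real^'d2^'n \<Rightarrow> (real^'d1^'d0) \<times> (real^'d2^'d1) \<Rightarrow> real^'d2^'n" where
  "Rf X Y \<theta> = Y - relu_mat (X ** fst \<theta>) ** snd \<theta>"

lemma loss_Rf: "loss X Y = (\<lambda>\<theta>. (1/2) * (norm (Rf X Y \<theta>))\<^sup>2)"
  by (simp add: fun_eq_iff loss_def Rf_def)

lemma tendsto_Rf: "(g \<longlongrightarrow> l) F \<Longrightarrow> ((\<lambda>z. Rf X Y (g z)) \<longlongrightarrow> Rf X Y l) F"
  unfolding Rf_def
  by (intro tendsto_intros bounded_bilinear.tendsto[OF bb_matmul] tendsto_relu tendsto_fst tendsto_snd) auto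

lemma isCont_Rf: "isCont (Rf X Y) x"
  unfolding isCont_def by (rule tendsto_Rf) (rule tendsto_ident_at)

lemma quad_step:
  fixes a b t K :: real
  assumes "0 \<le> b" "0 \<le> a" "a \<le> b + t * K" "t > 0" "K \<ge> 0"
  shows "((1/2) * a\<^sup>2 - (1/2) * b\<^sup>2) / t \<le> K * (b + t * K / 2)"
proof -
  have "a\<^sup>2 - b\<^sup>2 \<le> t * K * (2 * b + t * K)"
  proof (cases "a \<le> b")
    case True
    then have "a\<^sup>2 \<le> b\<^sup>2" using assms by (simp add: power_mono)
    moreover have "0 \<le> t * K * (2 * b + t * K)" using assms by simp
    ultimately show ?thesis by linarith
  next
    case False
    have "a\<^sup>2 - b\<^sup>2 = (a - b) * (a + b)" by (simp add: power2_eq_square algebra_simps)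
    also have "\<dots> \<le> (t * K) * (2 * b + t * K)"
      using False assms by (intro mult_mono) auto
    finally show ?thesis .
  qed
  then show ?thesis using assms by (simp add: field_simps power2_eq_square)
qed

lemma clarke_quad:
  fixes R :: "'a::real_inner \<Rightarrow> 'b::real_normed_vector"
  assumes Rc: "\<And>y. isCont R y" and Kc: "\<And>y. isCont K y" and K0: "\<And>y. 0 \<le> K y"
    and step: "\<And>y t. t > 0 \<Longrightarrow> norm (R (y + t *\<^sub>R v) - R y) \<le> t * K y"
    and xi: "\<xi> \<in> clarke_subdiff (\<lambda>y. (1/2) * (norm (R y))\<^sup>2) x"
  shows "\<xi> \<bullet> v \<le> K x * norm (R x)"
proof (rule field_le_epsilon)
  fix e :: real assume e: "0 < e"
  define f where "f = (\<lambda>y. (1/2) * (norm (R y))\<^sup>2)"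
  define S where "S = (UNIV :: 'a set) \<times> {0::real<..}"
  define F where "F = at (x, 0::real) within S"
  define h where "h = (\<lambda>p::'a\<times>real. K (fst p) * (norm (R (fst p)) + snd p * K (fst p) / 2))"
  have ineq: "(f (y + t *\<^sub>R v) - f y) / t \<le> h (y, t)" if "t > 0" for y t
  proof -
    have "norm (R (y + t *\<^sub>R v)) - norm (R y) \<le> norm (R (y + t *\<^sub>R v) - R y)"
      by (rule norm_triangle_ineq2)
    then have "norm (R (y + t *\<^sub>R v)) \<le> norm (R y) + t * K y" using step[OF that, of y] by simp
    then show ?thesis unfolding f_def h_def fst_conv snd_conv
      using K0[of y] that by (intro quad_step) auto
  qed
  have id: "((\<lambda>p. p) \<longlongrightarrow> (x, 0)) F" unfolding F_def by (rule tendsto_ident_at)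
  have fx: "((\<lambda>p. fst p) \<longlongrightarrow> x) F" using tendsto_fst[OF id] by simp
  have sx: "((\<lambda>p. snd p) \<longlongrightarrow> 0) F" using tendsto_snd[OF id] by simp
  have "(h \<longlongrightarrow> K x * (norm (R x) + 0 * K x / 2)) F"
    unfolding h_def
    by (intro tendsto_intros isCont_tendsto_compose[OF Kc fx] isCont_tendsto_compose[OF Rc fx] sx) simp_all
  then have "(h \<longlongrightarrow> K x * norm (R x)) F" by simp
  then have ev1: "\<forall>\<^sub>F p in F. h p < K x * norm (R x) + e"
    using e by (intro order_tendstoD(2)) auto
  have ev2: "\<forall>\<^sub>F p in F. p \<in> S"
    unfolding F_def by (simp add: eventually_at_filter)
  have "\<forall>\<^sub>F p in F. (\<lambda>(y, t). ereal ((f (y + t *\<^sub>R v) - f y) / t)) p \<le> ereal (K x * norm (R x) + e)"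
    using ev1 ev2
  proof eventually_elim
    case (elim p)
    obtain y t where p: "p = (y, t)" by fastforce
    with elim have "t > 0" unfolding S_def by auto
    then show ?case using ineq[of t y] elim(1) p by auto
  qed
  then have "clarke_dir f x v \<le> ereal (K x * norm (R x) + e)"
    unfolding clarke_dir_def F_def S_def by (rule Limsup_bounded)
  moreover have "ereal (\<xi> \<bullet> v) \<le> clarke_dir f x v"
    using xi unfolding clarke_subdiff_def f_def by auto
  ultimately have "ereal (\<xi> \<bullet> v) \<le> ereal (K x * norm (R x) + e)" by (rule order_trans[rotated])
  then show "\<xi> \<bullet> v \<le> K x * norm (R x) + e" by simp
qed


lemma matmul_diff_left: "(A - B) ** C = A ** C - B ** (C::real^'k^'m)" for A B :: "real^'m^'n"
  by (simp add: vec_eq_iff matrix_matrix_mult_def sum_subtractf left_diff_distrib)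

lemma matmul_diff_right: "A ** (B - C) = A ** B - A ** (C::real^'k^'m)" for A :: "real^'m^'n"
  by (simp add: vec_eq_iff matrix_matrix_mult_def sum_subtractf right_diff_distrib)

lemma norm_Rf_loss: "norm (Rf X Y \<theta>) = sqrt 2 * sqrt (loss X Y \<theta>)"
proof -
  have "sqrt 2 * sqrt (loss X Y \<theta>) = sqrt (2 * loss X Y \<theta>)" by (simp add: real_sqrt_mult)
  also have "2 * loss X Y \<theta> = (norm (Rf X Y \<theta>))\<^sup>2" by (simp add: loss_Rf)
  finally show ?thesis by simp
qed

lemma clarke_loss_W:
  fixes X :: "real^'d0^'n" and Y :: "real^'d2^'n" and \<theta> \<xi> :: "(real^'d1^'d0) \<times> (real^'d2^'d1)"
  assumes xi: "\<xi> \<in> clarke_subdiff (loss X Y) \<theta>"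
  shows "norm (fst \<xi>) \<le> sqrt 2 * opnorm X * sqrt (loss X Y \<theta>) * norm (snd \<theta>)"
proof -
  define d where "d = fst \<xi>"
  define K where "K = (\<lambda>y::(real^'d1^'d0) \<times> (real^'d2^'d1). opnorm X * norm d * norm (snd y))"
  have "\<xi> \<bullet> (d, 0) \<le> K \<theta> * norm (Rf X Y \<theta>)"
  proof (rule clarke_quad[where R = "Rf X Y"])
    show "isCont (Rf X Y) y" for y by (rule isCont_Rf)
    show "isCont K y" for y unfolding K_def by (intro continuous_intros)
    show "0 \<le> K y" for y unfolding K_def using opnorm_nonneg[of X] by simp
    show "\<xi> \<in> clarke_subdiff (\<lambda>y. 1 / 2 * (norm (Rf X Y y))\<^sup>2) \<theta>" using xi by (simp add: loss_Rf)
    fix y :: "(real^'d1^'d0) \<times> (real^'d2^'d1)" and t :: real assume t: "0 < t"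
    have "Rf X Y (y + t *\<^sub>R (d, 0)) - Rf X Y y
        = (relu_mat (X ** fst y) - relu_mat (X ** (fst y + t *\<^sub>R d))) ** snd y"
      by (simp add: Rf_def matmul_diff_left)
    then have "norm (Rf X Y (y + t *\<^sub>R (d, 0)) - Rf X Y y)
        \<le> norm (relu_mat (X ** fst y) - relu_mat (X ** (fst y + t *\<^sub>R d))) * norm (snd y)"
      by (simp add: norm_matmul)
    also have "\<dots> \<le> norm (X ** fst y - X ** (fst y + t *\<^sub>R d)) * norm (snd y)"
      by (intro mult_right_mono relu_lip) simp
    also have "X ** fst y - X ** (fst y + t *\<^sub>R d) = - (t *\<^sub>R (X ** d))"
      by (simp add: matrix_add_ldistrib matmul_scaleR_right)
    also have "norm (- (t *\<^sub>R (X ** d))) = t * norm (X ** d)" using t by simp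
    also have "t * norm (X ** d) * norm (snd y) \<le> t * (opnorm X * norm d) * norm (snd y)"
      using t by (intro mult_right_mono mult_left_mono norm_opmul) auto
    also have "\<dots> = t * K y" unfolding K_def by simp
    finally show "norm (Rf X Y (y + t *\<^sub>R (d, 0)) - Rf X Y y) \<le> t * K y" .
  qed
  then have "(norm d)\<^sup>2 \<le> norm d * (opnorm X * norm (snd \<theta>) * norm (Rf X Y \<theta>))"
    by (simp add: inner_Pair_0 d_def K_def power2_norm_eq_inner mult_ac)
  then have "norm d \<le> opnorm X * norm (snd \<theta>) * norm (Rf X Y \<theta>)"
    using opnorm_nonneg[of X] by (cases "norm d = 0") (auto simp: power2_eq_square)
  then show ?thesis by (simp add: d_def norm_Rf_loss mult_ac)
qed

lemma clarke_loss_V: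
  fixes X :: "real^'d0^'n" and Y :: "real^'d2^'n" and \<theta> \<xi> :: "(real^'d1^'d0) \<times> (real^'d2^'d1)"
  assumes xi: "\<xi> \<in> clarke_subdiff (loss X Y) \<theta>"
  shows "norm (snd \<xi>) \<le> sqrt 2 * opnorm X * sqrt (loss X Y \<theta>) * norm (fst \<theta>)"
proof -
  define d where "d = snd \<xi>"
  define K where "K = (\<lambda>y::(real^'d1^'d0) \<times> (real^'d2^'d1). opnorm X * norm d * norm (fst y))"
  have "\<xi> \<bullet> (0, d) \<le> K \<theta> * norm (Rf X Y \<theta>)"
  proof (rule clarke_quad[where R = "Rf X Y"])
    show "isCont (Rf X Y) y" for y by (rule isCont_Rf)
    show "isCont K y" for y unfolding K_def by (intro continuous_intros)
    show "0 \<le> K y" for y unfolding K_def using opnorm_nonneg[of X] by simp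
    show "\<xi> \<in> clarke_subdiff (\<lambda>y. 1 / 2 * (norm (Rf X Y y))\<^sup>2) \<theta>" using xi by (simp add: loss_Rf)
    fix y :: "(real^'d1^'d0) \<times> (real^'d2^'d1)" and t :: real assume t: "0 < t"
    have "Rf X Y (y + t *\<^sub>R (0, d)) - Rf X Y y = - (t *\<^sub>R (relu_mat (X ** fst y) ** d))"
      by (simp add: Rf_def matrix_add_ldistrib matmul_scaleR_right)
    then have "norm (Rf X Y (y + t *\<^sub>R (0, d)) - Rf X Y y) = t * norm (relu_mat (X ** fst y) ** d)"
      using t by simp
    also have "\<dots> \<le> t * (norm (relu_mat (X ** fst y)) * norm d)"
      using t by (intro mult_left_mono norm_matmul) auto
    also have "\<dots> \<le> t * (norm (X ** fst y) * norm d)"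
      using t by (intro mult_left_mono mult_right_mono relu_le) auto
    also have "\<dots> \<le> t * (opnorm X * norm (fst y) * norm d)"
      using t by (intro mult_left_mono mult_right_mono norm_opmul) auto
    also have "\<dots> = t * K y" unfolding K_def by (simp add: mult_ac)
    finally show "norm (Rf X Y (y + t *\<^sub>R (0, d)) - Rf X Y y) \<le> t * K y" .
  qed
  then have "(norm d)\<^sup>2 \<le> norm d * (opnorm X * norm (fst \<theta>) * norm (Rf X Y \<theta>))"
    by (simp add: inner_Pair_0 d_def K_def power2_norm_eq_inner mult_ac)
  then have "norm d \<le> opnorm X * norm (fst \<theta>) * norm (Rf X Y \<theta>)"
    using opnorm_nonneg[of X] by (cases "norm d = 0") (auto simp: power2_eq_square)
  then show ?thesis by (simp add: d_def norm_Rf_loss mult_ac)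
qed



lemma meas_Icc: "u \<le> v \<Longrightarrow> measure lebesgue {u..v::real} = v - u"
  by simp

lemma intervals_measure:
  fixes u v :: "nat \<Rightarrow> real"
  assumes uv: "\<forall>i<n. u i \<le> v i"
    and disj: "\<forall>i<n. \<forall>j<n. i \<noteq> j \<longrightarrow> v i \<le> u j \<or> v j \<le> u i"
    and sub: "\<forall>i<n. {u i..v i} \<subseteq> Op" and Op: "Op \<in> lmeasurable"
  shows "(\<Sum>i<n. v i - u i) \<le> measure lebesgue Op"
proof -
  have "measure lebesgue (\<Union>i\<in>{..<n}. {u i..v i}) = (\<Sum>i<n. measure lebesgue {u i..v i})"
  proof (rule measure_negligible_finite_Union_image)
    show "pairwise (\<lambda>i j. negligible ({u i..v i} \<inter> {u j..v j})) {..<n}"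
      unfolding pairwise_def
    proof (intro ballI impI)
      fix i j assume ij: "i \<in> {..<n}" "j \<in> {..<n}" "i \<noteq> j"
      then have "v i \<le> u j \<or> v j \<le> u i" using disj by auto
      then show "negligible ({u i..v i} \<inter> {u j..v j})"
      proof
        assume "v i \<le> u j"
        then have "{u i..v i} \<inter> {u j..v j} \<subseteq> {u j}" by auto
        then show ?thesis by (rule negligible_subset[OF negligible_sing])
      next
        assume "v j \<le> u i"
        then have "{u i..v i} \<inter> {u j..v j} \<subseteq> {u i}" by auto
        then show ?thesis by (rule negligible_subset[OF negligible_sing])
      qed
    qed
  qed auto
  also have "\<dots> = (\<Sum>i<n. v i - u i)" using uv by (intro sum.cong) auto
  finally have eq: "measure lebesgue (\<Union>i\<in>{..<n}. {u i..v i}) = (\<Sum>i<n. v i - u i)" .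
  have "measure lebesgue (\<Union>i\<in>{..<n}. {u i..v i}) \<le> measure lebesgue Op"
    using sub Op by (intro measure_mono_fmeasurable) auto
  then show ?thesis using eq by simp
qed

lemma ac_cont:
  assumes "abs_continuous_on a b f"
  shows "continuous_on {a..b} f"
  unfolding continuous_on_iff
proof (intro ballI allI impI)
  fix x and e :: real assume x: "x \<in> {a..b}" and e: "0 < e"
  obtain d where d: "d > 0" and H0: "\<forall>(n::nat) (u::nat \<Rightarrow> real) (v::nat \<Rightarrow> real). (\<forall>i<n. a \<le> u i \<and> u i \<le> v i \<and> v i \<le> b) \<and>
        (\<forall>i<n. \<forall>j<n. i \<noteq> j \<longrightarrow> v i \<le> u j \<or> v j \<le> u i) \<and>
        (\<Sum>i<n. v i - u i) < d \<longrightarrow> (\<Sum>i<n. norm (f (v i) - f (u i))) < e"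
    using assms e unfolding abs_continuous_on_def by blast
  note H = H0[rule_format, OF conjI[OF _ conjI]]
  show "\<exists>d>0. \<forall>x'\<in>{a..b}. dist x' x < d \<longrightarrow> dist (f x') (f x) < e"
  proof (intro exI[of _ d] conjI ballI impI d)
    fix x' assume x': "x' \<in> {a..b}" and dx: "dist x' x < d"
    have "(\<Sum>i<(1::nat). norm (f ((\<lambda>_. max x x') i) - f ((\<lambda>_. min x x') i))) < e"
      using x x' dx by (intro H) (auto simp: dist_real_def)
    then have "norm (f (max x x') - f (min x x')) < e" by simp
    then show "dist (f x') (f x) < e"
      by (cases "x \<le> x'") (auto simp: dist_norm max_def min_def norm_minus_commute)
  qed
qed

lemma ac_comp:
  assumes "abs_continuous_on a b f" and g: "\<And>x y. norm (g x - g y) \<le> norm (x - y)"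
  shows "abs_continuous_on a b (\<lambda>t. g (f t))"
  unfolding abs_continuous_on_def
proof (intro allI impI)
  fix e :: real assume e: "0 < e"
  obtain d where d: "d > 0" and H0: "\<forall>(n::nat) (u::nat \<Rightarrow> real) (v::nat \<Rightarrow> real). (\<forall>i<n. a \<le> u i \<and> u i \<le> v i \<and> v i \<le> b) \<and>
        (\<forall>i<n. \<forall>j<n. i \<noteq> j \<longrightarrow> v i \<le> u j \<or> v j \<le> u i) \<and>
        (\<Sum>i<n. v i - u i) < d \<longrightarrow> (\<Sum>i<n. norm (f (v i) - f (u i))) < e"
    using assms e unfolding abs_continuous_on_def by blast
  note H = H0[rule_format, OF conjI[OF _ conjI]]
  show "\<exists>d>0. \<forall>(n::nat) (u::nat \<Rightarrow> real) (v::nat \<Rightarrow> real).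
        (\<forall>i<n. a \<le> u i \<and> u i \<le> v i \<and> v i \<le> b) \<and>
        (\<forall>i<n. \<forall>j<n. i \<noteq> j \<longrightarrow> v i \<le> u j \<or> v j \<le> u i) \<and>
        (\<Sum>i<n. v i - u i) < d
        \<longrightarrow> (\<Sum>i<n. norm (g (f (v i)) - g (f (u i)))) < e"
  proof (intro exI[of _ d] conjI allI impI d)
    fix n :: nat and u v :: "nat \<Rightarrow> real" assume A: "(\<forall>i<n. a \<le> u i \<and> u i \<le> v i \<and> v i \<le> b) \<and>
        (\<forall>i<n. \<forall>j<n. i \<noteq> j \<longrightarrow> v i \<le> (u j::real) \<or> v j \<le> u i) \<and> (\<Sum>i<n. v i - u i) < d"
    have "(\<Sum>i<n. norm (g (f (v i)) - g (f (u i)))) \<le> (\<Sum>i<n. norm (f (v i) - f (u i)))"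
      by (intro sum_mono g)
    also have "\<dots> < e" using A by (intro H) auto
    finally show "(\<Sum>i<n. norm (g (f (v i)) - g (f (u i)))) < e" .
  qed
qed


lemma tagged_elem:
  assumes D: "\<D> tagged_division_of {a..b::real}" and p: "p \<in> \<D>"
  shows "\<exists>u v. snd p = {u..v} \<and> u \<le> fst p \<and> fst p \<le> v \<and> a \<le> u \<and> v \<le> b"
proof -
  obtain x K where pk: "p = (x, K)" by fastforce
  from tagged_division_ofD(2-4)[OF D] p pk obtain u v where
    "x \<in> K" "K \<subseteq> {a..b}" "K = cbox u v" by metis
  then show ?thesis using pk by (intro exI[of _ u] exI[of _ v]) auto
qed

lemma ac_mvi:
  fixes f :: "real \<Rightarrow> 'a::real_normed_vector" and g :: "real \<Rightarrow> real"
  assumes ab: "a \<le> b" and ac: "abs_continuous_on a b f"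
    and N: "N \<in> null_sets lebesgue"
    and der: "\<And>x. x \<in> {a..b} \<Longrightarrow> x \<notin> N \<Longrightarrow> \<exists>f'. (f has_vector_derivative f') (at x) \<and> norm f' \<le> g x"
    and gc: "continuous_on {a..b} g" and g0: "\<And>x. x \<in> {a..b} \<Longrightarrow> 0 \<le> g x"
  shows "norm (f b - f a) \<le> integral {a..b} g"
proof (rule field_le_epsilon)
  fix e :: real assume e: "0 < e"
  define \<epsilon> where "\<epsilon> = e / (b - a + 3)"
  have \<epsilon>: "0 < \<epsilon>" using ab e by (simp add: \<epsilon>_def)
  have \<epsilon>e: "\<epsilon> * (b - a + 3) = e" using ab by (simp add: \<epsilon>_def)
  obtain \<delta> where \<delta>: "\<delta> > 0" and H0: "\<forall>(n::nat) (u::nat \<Rightarrow> real) (v::nat \<Rightarrow> real). (\<forall>i<n. a \<le> u i \<and> u i \<le> v i \<and> v i \<le> b) \<and>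
        (\<forall>i<n. \<forall>j<n. i \<noteq> j \<longrightarrow> v i \<le> u j \<or> v j \<le> u i) \<and>
        (\<Sum>i<n. v i - u i) < \<delta> \<longrightarrow> (\<Sum>i<n. norm (f (v i) - f (u i))) < \<epsilon>"
    using ac \<epsilon> unfolding abs_continuous_on_def by blast
  note AC = H0[rule_format, OF conjI[OF _ conjI]]
  have Nl: "N \<in> sets lebesgue" using N by auto
  obtain Op where Op: "open Op" "N \<subseteq> Op" "(Op - N) \<in> lmeasurable" "emeasure lebesgue (Op - N) < ennreal \<delta>"
    using sets_lebesgue_outer_open[OF Nl \<delta>] by blast
  have Osets: "Op \<in> sets lebesgue"
  proof -
    have "Op = (Op - N) \<union> N" using Op(2) by auto
    moreover have "(Op - N) \<union> N \<in> sets lebesgue" using Op(3) Nl by (meson fmeasurableD sets.Un)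
    ultimately show ?thesis by simp
  qed
  have Oeq: "emeasure lebesgue Op = emeasure lebesgue (Op - N)"
    using emeasure_Diff_null_set[OF N Osets] by simp
  have Ol: "Op \<in> lmeasurable"
    using Oeq Op(4) Osets by (intro fmeasurableI) (auto simp: order_less_le_trans)
  have Om: "measure lebesgue Op < \<delta>"
  proof -
    have "ennreal (measure lebesgue Op) < ennreal \<delta>"
      using Oeq Op(4) emeasure_eq_measure2[OF Ol] by simp
    then show ?thesis by (simp add: ennreal_less_iff)
  qed
  have gint: "(g has_integral integral {a..b} g) {a..b}"
    using integrable_continuous_real[OF gc] by (simp add: has_integral_integral)
  then obtain \<gamma>1 where \<gamma>1: "gauge \<gamma>1" and \<gamma>1I: "\<And>\<D>. \<D> tagged_division_of {a..b} \<Longrightarrow> \<gamma>1 fine \<D> \<Longrightarrow>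
      norm ((\<Sum>(x,K)\<in>\<D>. Henstock_Kurzweil_Integration.content K *\<^sub>R g x) - integral {a..b} g) < \<epsilon>"
    using \<epsilon> unfolding has_integral_real by meson
  have "\<forall>x. \<exists>r>0. (x \<in> N \<longrightarrow> ball x r \<subseteq> Op) \<and>
      (x \<in> {a..b} \<and> x \<notin> N \<longrightarrow> (\<forall>y. norm (y - x) < r \<longrightarrow> norm (f y - f x) \<le> (g x + \<epsilon>) * norm (y - x)))"
  proof
    fix x
    show "\<exists>r>0. (x \<in> N \<longrightarrow> ball x r \<subseteq> Op) \<and>
      (x \<in> {a..b} \<and> x \<notin> N \<longrightarrow> (\<forall>y. norm (y - x) < r \<longrightarrow> norm (f y - f x) \<le> (g x + \<epsilon>) * norm (y - x)))"
    proof (cases "x \<in> N")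
      case True
      then obtain r where "r > 0" "ball x r \<subseteq> Op" using Op(1,2) openE by blast
      then show ?thesis using True by auto
    next
      case xN: False
      show ?thesis
      proof (cases "x \<in> {a..b}")
        case True
        obtain f' where f': "(f has_vector_derivative f') (at x)" "norm f' \<le> g x"
          using der True xN by blast
        then have "(f has_derivative (\<lambda>h. h *\<^sub>R f')) (at x)" by (simp add: has_vector_derivative_def)
        then obtain r where r: "r > 0" "\<forall>y. norm (y - x) < r \<longrightarrow> norm (f y - f x - (y - x) *\<^sub>R f') \<le> \<epsilon> * norm (y - x)"
          using \<epsilon> unfolding has_derivative_at_alt by blast
        have "norm (f y - f x) \<le> (g x + \<epsilon>) * norm (y - x)" if y: "norm (y - x) < r" for y
        proof -
          have "norm (f y - f x) \<le> norm ((y - x) *\<^sub>R f') + norm (f y - f x - (y - x) *\<^sub>R f')"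
            by (rule norm_triangle_sub)
          also have "\<dots> \<le> norm (y - x) * g x + \<epsilon> * norm (y - x)"
            using r(2) y f'(2) by (intro add_mono) (auto intro: mult_left_mono)
          finally show ?thesis by (simp add: algebra_simps)
        qed
        then show ?thesis using r(1) xN by auto
      next
        case False
        then show ?thesis using xN by (intro exI[of _ 1]) auto
      qed
    qed
  qed
  then obtain r where r: "\<And>x. r x > 0" and rN: "\<And>x. x \<in> N \<Longrightarrow> ball x (r x) \<subseteq> Op"
    and rD: "\<And>x y. x \<in> {a..b} \<Longrightarrow> x \<notin> N \<Longrightarrow> norm (y - x) < r x \<Longrightarrow> norm (f y - f x) \<le> (g x + \<epsilon>) * norm (y - x)"
    by metis
  define \<gamma> where "\<gamma> = (\<lambda>x. \<gamma>1 x \<inter> ball x (r x))"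
  have "gauge \<gamma>" unfolding \<gamma>_def using \<gamma>1 r by (intro gauge_Int gauge_ball_dependent) auto
  then obtain \<D> where D: "\<D> tagged_division_of {a..b}" "\<gamma> fine \<D>" using fine_division_exists_real by blast
  have D1: "\<gamma>1 fine \<D>" using D(2) unfolding \<gamma>_def fine_def by auto
  have fin: "finite \<D>" using D(1) by blast
  have elem: "\<exists>u v. snd p = {u..v} \<and> u \<le> fst p \<and> fst p \<le> v \<and> a \<le> u \<and> v \<le> b \<and> {u..v} \<subseteq> ball (fst p) (r (fst p))"
    if p: "p \<in> \<D>" for p
  proof -
    obtain u v where uv: "snd p = {u..v}" "u \<le> fst p" "fst p \<le> v" "a \<le> u" "v \<le> b"
      using tagged_elem[OF D(1) p] by blast
    have "snd p \<subseteq> \<gamma> (fst p)" using D(2) p unfolding fine_def by (cases p) auto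
    then show ?thesis using uv unfolding \<gamma>_def by (intro exI[of _ u] exI[of _ v]) auto
  qed
  define h where "h = (\<lambda>p::real \<times> real set. norm (f (Sup (snd p)) - f (Inf (snd p))))"
  have "f b - f a = (\<Sum>(x,K)\<in>\<D>. f (Sup K) - f (Inf K))"
    using additive_tagged_division_1[OF ab D(1), where f=f] by simp
  also have "\<dots> = (\<Sum>p\<in>\<D>. f (Sup (snd p)) - f (Inf (snd p)))" by (simp add: split_def)
  finally have "norm (f b - f a) \<le> (\<Sum>p\<in>\<D>. h p)" unfolding h_def by (simp add: norm_sum)
  define D1' where "D1' = {p \<in> \<D>. fst p \<notin> N}"
  define D2 where "D2 = {p \<in> \<D>. fst p \<in> N}"
  have "(\<Sum>p\<in>\<D>. h p) = (\<Sum>p\<in>D1'. h p) + (\<Sum>p\<in>D2. h p)"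
  proof -
    have "\<D> = D1' \<union> D2" "D1' \<inter> D2 = {}" unfolding D1'_def D2_def by auto
    moreover have "finite D1'" "finite D2" using fin unfolding D1'_def D2_def by auto
    ultimately show ?thesis by (simp add: sum.union_disjoint)
  qed
  have P1: "(\<Sum>p\<in>D1'. h p) \<le> integral {a..b} g + \<epsilon> + \<epsilon> * (b - a)"
  proof -
    have "(\<Sum>p\<in>D1'. h p) \<le> (\<Sum>p\<in>D1'. Henstock_Kurzweil_Integration.content (snd p) * (g (fst p) + \<epsilon>))"
    proof (rule sum_mono)
      fix p assume p: "p \<in> D1'"
      then have pD: "p \<in> \<D>" and pN: "fst p \<notin> N" by (auto simp: D1'_def)
      obtain u v where uv: "snd p = {u..v}" "u \<le> fst p" "fst p \<le> v" "a \<le> u" "v \<le> b"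
          "{u..v} \<subseteq> ball (fst p) (r (fst p))"
        using elem[OF pD] by blast
      define x where "x = fst p"
      have xab: "x \<in> {a..b}" using uv by (auto simp: x_def)
      have "v \<in> {u..v}" "u \<in> {u..v}" using uv(2,3) by auto
      then have "v \<in> ball x (r x)" "u \<in> ball x (r x)" using uv(6) unfolding x_def by blast+
      then have vb: "norm (v - x) < r x" and ub: "norm (u - x) < r x"
        by (auto simp: dist_real_def abs_minus_commute)
      have "h p = norm (f v - f u)" using uv by (simp add: h_def)
      also have "f v - f u = (f v - f x) - (f u - f x)" by simp
      also have "norm \<dots> \<le> norm (f v - f x) + norm (f u - f x)" by (rule norm_triangle_ineq4)
      also have "\<dots> \<le> (g x + \<epsilon>) * norm (v - x) + (g x + \<epsilon>) * norm (u - x)"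
        using rD[OF xab pN[folded x_def] vb] rD[OF xab pN[folded x_def] ub] by (rule add_mono)
      also have "\<dots> = Henstock_Kurzweil_Integration.content (snd p) * (g (fst p) + \<epsilon>)"
        using uv by (simp add: x_def algebra_simps)
      finally show "h p \<le> Henstock_Kurzweil_Integration.content (snd p) * (g (fst p) + \<epsilon>)" .
    qed
    also have "\<dots> \<le> (\<Sum>p\<in>\<D>. Henstock_Kurzweil_Integration.content (snd p) * (g (fst p) + \<epsilon>))"
    proof (rule sum_mono2[OF fin])
      show "D1' \<subseteq> \<D>" by (auto simp: D1'_def)
      fix p assume "p \<in> \<D> - D1'"
      then have pD: "p \<in> \<D>" by auto
      obtain u v where uv: "snd p = {u..v}" "u \<le> fst p" "fst p \<le> v" "a \<le> u" "v \<le> b"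
        using elem[OF pD] by blast
      then have "0 \<le> g (fst p)" by (intro g0) auto
      then show "0 \<le> Henstock_Kurzweil_Integration.content (snd p) * (g (fst p) + \<epsilon>)" using \<epsilon> by simp
    qed
    also have "\<dots> = (\<Sum>p\<in>\<D>. Henstock_Kurzweil_Integration.content (snd p) * g (fst p)) + \<epsilon> * (\<Sum>p\<in>\<D>. Henstock_Kurzweil_Integration.content (snd p))"
      by (simp add: algebra_simps sum.distrib sum_distrib_left)
    also have "(\<Sum>p\<in>\<D>. Henstock_Kurzweil_Integration.content (snd p)) = b - a"
    proof -
      have "\<D> tagged_division_of cbox a b" using D(1) by simp
      from additive_content_tagged_division[OF this] show ?thesis using ab by (simp add: split_def)
    qed
    also have "(\<Sum>p\<in>\<D>. Henstock_Kurzweil_Integration.content (snd p) * g (fst p)) \<le> integral {a..b} g + \<epsilon>"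
    proof -
      have "norm ((\<Sum>(x,K)\<in>\<D>. Henstock_Kurzweil_Integration.content K *\<^sub>R g x) - integral {a..b} g) < \<epsilon>" by (rule \<gamma>1I[OF D(1) D1])
      moreover have "(\<Sum>(x,K)\<in>\<D>. Henstock_Kurzweil_Integration.content K *\<^sub>R g x) = (\<Sum>p\<in>\<D>. Henstock_Kurzweil_Integration.content (snd p) * g (fst p))"
        by (simp add: split_def)
      ultimately show ?thesis by simp
    qed
    finally show ?thesis by simp
  qed
  have P2: "(\<Sum>p\<in>D2. h p) < \<epsilon>"
  proof -
    define D3 where "D3 = {p \<in> D2. Henstock_Kurzweil_Integration.content (snd p) > 0}"
    have finD2: "finite D2" using fin unfolding D2_def by auto
    have eq23: "(\<Sum>p\<in>D2. h p) = (\<Sum>p\<in>D3. h p)"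
    proof (rule sum.mono_neutral_right[OF finD2])
      show "D3 \<subseteq> D2" by (auto simp: D3_def)
      show "\<forall>p\<in>D2 - D3. h p = 0"
      proof
        fix p assume p: "p \<in> D2 - D3"
        then have pD: "p \<in> \<D>" and c: "\<not> Henstock_Kurzweil_Integration.content (snd p) > 0" by (auto simp: D2_def D3_def)
        obtain u v where uv: "snd p = {u..v}" "u \<le> fst p" "fst p \<le> v"
          using elem[OF pD] by blast
        then have "u = v" using c by simp
        then show "h p = 0" using uv by (simp add: h_def)
      qed
    qed
    have finD3: "finite D3" using finD2 unfolding D3_def by auto
    obtain \<phi> where \<phi>: "bij_betw \<phi> {0..<card D3} D3" using ex_bij_betw_nat_finite[OF finD3] by blast
    define n where "n = card D3"
    define uu where "uu = (\<lambda>i. Inf (snd (\<phi> i)))"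
    define vv where "vv = (\<lambda>i. Sup (snd (\<phi> i)))"
    have \<phi>D3: "\<phi> i \<in> D3" if "i < n" for i using \<phi> that by (auto simp: bij_betw_def n_def)
    have props: "snd (\<phi> i) = {uu i..vv i} \<and> uu i < vv i \<and> a \<le> uu i \<and> vv i \<le> b \<and> {uu i..vv i} \<subseteq> Op"
      if i: "i < n" for i
    proof -
      have p: "\<phi> i \<in> \<D>" "fst (\<phi> i) \<in> N" "Henstock_Kurzweil_Integration.content (snd (\<phi> i)) > 0"
        using \<phi>D3[OF i] by (auto simp: D3_def D2_def)
      obtain u v where uv: "snd (\<phi> i) = {u..v}" "u \<le> fst (\<phi> i)" "fst (\<phi> i) \<le> v" "a \<le> u" "v \<le> b"
          "{u..v} \<subseteq> ball (fst (\<phi> i)) (r (fst (\<phi> i)))"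
        using elem[OF p(1)] by blast
      have "u < v" using p(3) uv(1) by (cases "u \<le> v") auto
      moreover have "uu i = u" "vv i = v" using uv(1) \<open>u < v\<close> by (auto simp: uu_def vv_def)
      moreover have "{u..v} \<subseteq> Op" using uv(6) rN[OF p(2)] by blast
      ultimately show ?thesis using uv by auto
    qed
    have disjall: "\<forall>i<n. \<forall>j<n. i \<noteq> j \<longrightarrow> vv i \<le> uu j \<or> vv j \<le> uu i"
    proof (intro allI impI)
      fix i j assume ij: "i < n" "j < n" "i \<noteq> j"
      have "\<phi> i \<noteq> \<phi> j" using \<phi> ij unfolding bij_betw_def inj_on_def n_def by auto
      moreover have "\<phi> i \<in> \<D>" "\<phi> j \<in> \<D>" using \<phi>D3 ij by (auto simp: D3_def D2_def)
      ultimately have "interior (snd (\<phi> i)) \<inter> interior (snd (\<phi> j)) = {}"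
        using tagged_division_ofD(5)[OF D(1), of "fst (\<phi> i)" "snd (\<phi> i)" "fst (\<phi> j)" "snd (\<phi> j)"]
        by simp
      then have disj: "{uu i<..<vv i} \<inter> {uu j<..<vv j} = {}" using props[OF ij(1)] props[OF ij(2)] by simp
      show "vv i \<le> uu j \<or> vv j \<le> uu i"
      proof (rule ccontr)
        assume c: "\<not> (vv i \<le> uu j \<or> vv j \<le> uu i)"
        define m where "m = (max (uu i) (uu j) + min (vv i) (vv j)) / 2"
        have "m \<in> {uu i<..<vv i} \<inter> {uu j<..<vv j}"
          using c props[OF ij(1)] props[OF ij(2)] unfolding m_def by (auto simp: max_def min_def)
        then show False using disj by auto
      qed
    qed
    have "(\<Sum>i<n. norm (f (vv i) - f (uu i))) < \<epsilon>"
    proof (rule AC)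
      show "\<forall>i<n. a \<le> uu i \<and> uu i \<le> vv i \<and> vv i \<le> b" using props by (meson less_imp_le)
      show "\<forall>i<n. \<forall>j<n. i \<noteq> j \<longrightarrow> vv i \<le> uu j \<or> vv j \<le> uu i" by (rule disjall)
      have "(\<Sum>i<n. vv i - uu i) \<le> measure lebesgue Op"
        using props Ol disjall by (intro intervals_measure) (auto simp: less_imp_le)
      then show "(\<Sum>i<n. vv i - uu i) < \<delta>" using Om by simp
    qed
    moreover have "(\<Sum>i<n. norm (f (vv i) - f (uu i))) = (\<Sum>p\<in>D3. h p)"
      unfolding h_def uu_def vv_def n_def
      using sum.reindex_bij_betw[OF \<phi>, of "\<lambda>p. norm (f (Sup (snd p)) - f (Inf (snd p)))"]
      by (simp add: lessThan_atLeast0)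
    ultimately show ?thesis using eq23 by simp
  qed
  have "\<epsilon> * (b - a) + 2 * \<epsilon> \<le> e" using \<epsilon>e \<epsilon> by (simp add: algebra_simps)
  then show "norm (f b - f a) \<le> integral {a..b} g + e"
    using \<open>norm (f b - f a) \<le> (\<Sum>p\<in>\<D>. h p)\<close> \<open>(\<Sum>p\<in>\<D>. h p) = (\<Sum>p\<in>D1'. h p) + (\<Sum>p\<in>D2. h p)\<close> P1 P2
    by linarith
qed




lemma int_cont: "continuous_on {0..t} f \<Longrightarrow> continuous_on {0..t} (\<lambda>x. integral {0..x} (f::real\<Rightarrow>real))"
  by (intro indefinite_integral_continuous_1 integrable_continuous_real)

lemma int_deriv:
  assumes "continuous_on {0..t} f" "s \<in> {0<..<t}"
  shows "((\<lambda>x. integral {0..x} (f::real\<Rightarrow>real)) has_real_derivative f s) (at s)"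
proof -
  have "((\<lambda>x. integral {0..x} f) has_vector_derivative f s) (at s within {0..t})"
    using assms by (intro integral_has_vector_derivative) auto
  moreover have "at s within {0..t} = at s" using assms(2) by (intro at_within_interior) auto
  ultimately show ?thesis by (simp add: has_real_derivative_iff_has_vector_derivative)
qed

lemma int_nonneg:
  assumes "continuous_on {0..s} f" "\<And>x. x \<in> {0..s} \<Longrightarrow> 0 \<le> (f::real\<Rightarrow>real) x"
  shows "0 \<le> integral {0..s} f"
  using assms by (intro integral_nonneg integrable_continuous_real) auto

lemma int_le:
  assumes "continuous_on {0..s} f" "continuous_on {0..s} g" "\<And>x. x \<in> {0..s} \<Longrightarrow> (f::real\<Rightarrow>real) x \<le> g x"
  shows "integral {0..s} f \<le> integral {0..s} g"
  using assms by (intro integral_le integrable_continuous_real) auto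

lemma int_mono:
  assumes "continuous_on {0..t} f" "\<And>x. x \<in> {0..t} \<Longrightarrow> 0 \<le> (f::real\<Rightarrow>real) x" "r \<le> s" "s \<le> t"
  shows "integral {0..r} f \<le> integral {0..s} f"
proof (cases "0 \<le> r")
  case True
  show ?thesis
  proof (rule integral_subset_le)
    show "{0..r} \<subseteq> {0..s}" using assms by auto
    show "f integrable_on {0..r}" "f integrable_on {0..s}" using assms True
      by (auto intro!: integrable_continuous_real elim: continuous_on_subset)
    show "\<forall>x\<in>{0..s}. 0 \<le> f x" using assms by auto
  qed
next
  case False
  then have "integral {0..r} f = 0" by simp
  moreover have "0 \<le> integral {0..s} f" using assms False
    by (intro int_nonneg) (auto elim: continuous_on_subset)
  ultimately show ?thesis by simp
qed

lemma gronwall_lin: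
  fixes P a b :: "real \<Rightarrow> real"
  assumes t0: "0 \<le> t" and Pc: "continuous_on {0..t} P"
    and ac: "continuous_on {0..t} a" and bc: "continuous_on {0..t} b"
    and a0: "\<And>s. s \<in> {0..t} \<Longrightarrow> 0 \<le> a s" and b0: "\<And>s. s \<in> {0..t} \<Longrightarrow> 0 \<le> b s"
    and der: "\<And>s. s \<in> {0<..<t} \<Longrightarrow> \<exists>P'. (P has_real_derivative P') (at s) \<and> P' \<le> a s + b s * P s"
  shows "P t \<le> exp (integral {0..t} b) * (P 0 + integral {0..t} a)"
proof -
  define B where "B = (\<lambda>s. integral {0..s} b)"
  define A where "A = (\<lambda>s. integral {0..s} a)"
  define G where "G = (\<lambda>s. A s - P s * exp (- B s))"
  have B0: "0 \<le> B s" if "s \<in> {0..t}" for s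
    unfolding B_def using that b0 by (intro int_nonneg) (auto intro: continuous_on_subset[OF bc])
  have "G 0 \<le> G t"
  proof (rule DERIV_nonneg_imp_increasing_open[OF t0])
    show "continuous_on {0..t} G" unfolding G_def B_def A_def
      by (intro continuous_intros int_cont Pc ac bc)
    fix s assume s: "0 < s" "s < t"
    obtain P' where P': "(P has_real_derivative P') (at s)" "P' \<le> a s + b s * P s" using der s by auto
    have dB: "(B has_real_derivative b s) (at s)" unfolding B_def using bc s by (intro int_deriv) auto
    have dA: "(A has_real_derivative a s) (at s)" unfolding A_def using ac s by (intro int_deriv) auto
    have dG: "(G has_real_derivative (a s - (P' * exp (- B s) + exp (- B s) * (- b s) * P s))) (at s)"
    proof -
      have dE: "((\<lambda>z. exp (- B z)) has_real_derivative exp (- B s) * (- b s)) (at s)"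
        by (rule DERIV_fun_exp[OF DERIV_minus[OF dB]])
      show ?thesis unfolding G_def by (intro DERIV_diff dA DERIV_mult[OF P'(1) dE])
    qed
    have "exp (- B s) \<le> 1" using B0[of s] s by simp
    then have "(a s + b s * P s) * exp (- B s) \<le> a s + b s * P s * exp (- B s)"
      using a0[of s] s by (simp add: algebra_simps mult_left_le)
    moreover have "P' * exp (- B s) \<le> (a s + b s * P s) * exp (- B s)"
      using P'(2) by (intro mult_right_mono) auto
    ultimately have "0 \<le> a s - (P' * exp (- B s) + exp (- B s) * (- b s) * P s)"
      by (simp add: algebra_simps)
    then show "\<exists>y. (G has_real_derivative y) (at s) \<and> 0 \<le> y" using dG by blast
  qed
  then have "- P 0 \<le> A t - P t * exp (- B t)" by (simp add: G_def A_def B_def)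
  then have "P t * exp (- B t) \<le> P 0 + A t" by simp
  then have "P t * exp (- B t) * exp (B t) \<le> (P 0 + A t) * exp (B t)"
    by (intro mult_right_mono) auto
  then show ?thesis by (simp add: A_def B_def exp_minus field_simps)
qed



lemma hvd_fst: "(f has_vector_derivative f') F \<Longrightarrow> ((\<lambda>x. fst (f x)) has_vector_derivative fst f') F"
  unfolding has_vector_derivative_def by (drule has_derivative_fst) simp

lemma hvd_snd: "(f has_vector_derivative f') F \<Longrightarrow> ((\<lambda>x. snd (f x)) has_vector_derivative snd f') F"
  unfolding has_vector_derivative_def by (drule has_derivative_snd) simp

lemma loss_cont: "continuous_on UNIV (loss X Y)"
proof -
  have "isCont (\<lambda>y. 1/2 * (norm (Rf X Y y))\<^sup>2) y" for y
    by (intro continuous_intros isCont_Rf)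
  then show ?thesis unfolding loss_Rf by (intro continuous_at_imp_continuous_on) auto
qed

theorem lemma3p1:
  fixes X :: "real^'d0^'n" and Y :: "real^'d2^'n"
    and \<theta> :: "real \<Rightarrow> (real^'d1^'d0) \<times> (real^'d2^'d1)"
    and T :: real
  assumes "T > 0"
    and "\<forall>t\<in>{0..<T}. abs_continuous_on 0 t \<theta>"
    and "AE t in lebesgue. t \<in> {0..<T} \<longrightarrow>
           (\<exists>\<theta>'. (\<theta> has_vector_derivative \<theta>') (at t) \<and> \<theta>' \<in> uminus ` clarke_subdiff (loss X Y) (\<theta> t))"
    and "t \<in> {0..<T}"
  shows "(norm (\<theta> t - \<theta> 0)
           \<le> sqrt 2 * opnorm X * (norm (fst (\<theta> 0)) + norm (snd (\<theta> 0)))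
               * integral {0..t} (\<lambda>s. sqrt (loss X Y (\<theta> s)))
               * exp (sqrt 2 * opnorm X * integral {0..t} (\<lambda>s. sqrt (loss X Y (\<theta> s))))) \<and>
         (opnorm X * norm (fst (\<theta> t) - fst (\<theta> 0))
           \<le> (1/2) * (2 * sqrt 2 * (opnorm X)\<^sup>2 * norm (snd (\<theta> 0))
                        * integral {0..t} (\<lambda>s. sqrt (loss X Y (\<theta> s)))
                      + 2 * (opnorm X)^3 * norm (fst (\<theta> 0))
                        * (integral {0..t} (\<lambda>s. sqrt (loss X Y (\<theta> s))))\<^sup>2)
               * exp ((opnorm X)\<^sup>2 * (integral {0..t} (\<lambda>s. sqrt (loss X Y (\<theta> s))))\<^sup>2))"
proof -
  define u where "u = opnorm X"
  define k where "k = sqrt 2 * u"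
  have u0: "0 \<le> u" unfolding u_def by (rule opnorm_nonneg)
  then have k0: "0 \<le> k" unfolding k_def by simp
  define Lq where "Lq = (\<lambda>s. sqrt (loss X Y (\<theta> s)))"
  define S where "S = (\<lambda>s. integral {0..s} Lq)"
  define W where "W = (\<lambda>s. fst (\<theta> s))"
  define V where "V = (\<lambda>s. snd (\<theta> s))"
  have t: "0 \<le> t" "t < T" using assms(4) by auto
  obtain N where N1: "{x \<in> space lebesgue. \<not> (x \<in> {0..<T} \<longrightarrow>
           (\<exists>\<theta>'. (\<theta> has_vector_derivative \<theta>') (at x) \<and> \<theta>' \<in> uminus ` clarke_subdiff (loss X Y) (\<theta> x)))} \<subseteq> N"
    and N2: "emeasure lebesgue N = 0" and N3: "N \<in> sets lebesgue"
    using assms(3) by (rule AE_E)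
  have N: "N \<in> null_sets lebesgue" using N2 N3 by auto
  have Nprop: "\<exists>\<theta>'. (\<theta> has_vector_derivative \<theta>') (at s) \<and> \<theta>' \<in> uminus ` clarke_subdiff (loss X Y) (\<theta> s)"
    if "s \<in> {0..<T}" "s \<notin> N" for s
  proof (rule ccontr)
    assume c: "\<not> (\<exists>\<theta>'. (\<theta> has_vector_derivative \<theta>') (at s) \<and> \<theta>' \<in> uminus ` clarke_subdiff (loss X Y) (\<theta> s))"
    have "s \<in> {x \<in> space lebesgue. \<not> (x \<in> {0..<T} \<longrightarrow>
           (\<exists>\<theta>'. (\<theta> has_vector_derivative \<theta>') (at x) \<and> \<theta>' \<in> uminus ` clarke_subdiff (loss X Y) (\<theta> x)))}"
      using c that(1) by simp
    then show False using N1 that(2) by blast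
  qed
  have derb: "\<exists>\<theta>'. (\<theta> has_vector_derivative \<theta>') (at s) \<and> norm (fst \<theta>') \<le> k * Lq s * norm (V s)
      \<and> norm (snd \<theta>') \<le> k * Lq s * norm (W s)"
    if sN: "s \<in> {0..<T}" "s \<notin> N" for s
  proof -
    obtain \<theta>' \<xi> where d: "(\<theta> has_vector_derivative \<theta>') (at s)" and xi: "\<xi> \<in> clarke_subdiff (loss X Y) (\<theta> s)"
      and eq: "\<theta>' = - \<xi>"
      using Nprop[OF sN] by blast
    have "norm (fst \<theta>') = norm (fst \<xi>)" "norm (snd \<theta>') = norm (snd \<xi>)" using eq by auto
    then show ?thesis using d clarke_loss_W[OF xi] clarke_loss_V[OF xi]
      unfolding k_def u_def Lq_def V_def W_def by (intro exI[of _ \<theta>']) auto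
  qed
  have \<theta>c: "continuous_on {0..t} \<theta>" using assms(2) t by (intro ac_cont) auto
  have Lqc: "continuous_on {0..t} Lq" unfolding Lq_def
    by (intro continuous_intros continuous_on_compose2[OF loss_cont \<theta>c]) auto
  have Wc: "continuous_on {0..t} W" unfolding W_def by (intro continuous_intros \<theta>c)
  have Vc: "continuous_on {0..t} V" unfolding V_def by (intro continuous_intros \<theta>c)
  have Lq0: "0 \<le> Lq s" for s unfolding Lq_def by (simp add: loss_def)
  have acs: "abs_continuous_on 0 s \<theta>" if "s \<in> {0..t}" for s using assms(2) t that by auto
  have fstlip: "norm (fst x - fst y) \<le> norm (x - y)" for x y :: "(real^'d1^'d0) \<times> (real^'d2^'d1)"
  proof -
    have e: "(fst x - fst y, snd x - snd y) = x - y" by (simp add: prod_eq_iff)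
    show ?thesis using norm_fst_le[of "fst x - fst y" "snd x - snd y"] unfolding e .
  qed
  have sndlip: "norm (snd x - snd y) \<le> norm (x - y)" for x y :: "(real^'d1^'d0) \<times> (real^'d2^'d1)"
  proof -
    have e: "(fst x - fst y, snd x - snd y) = x - y" by (simp add: prod_eq_iff)
    show ?thesis using norm_snd_le[of "snd x - snd y" "fst x - fst y"] unfolding e .
  qed
  have mW: "norm (W s - W 0) \<le> integral {0..s} (\<lambda>r. k * Lq r * norm (V r))" if s: "s \<in> {0..t}" for s
  proof (rule ac_mvi[OF _ _ N])
    show "0 \<le> s" using s by auto
    show "abs_continuous_on 0 s W" unfolding W_def using acs[OF s] fstlip by (rule ac_comp)
    show "continuous_on {0..s} (\<lambda>r. k * Lq r * norm (V r))" using s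
      by (intro continuous_intros continuous_on_subset[OF Lqc] continuous_on_subset[OF Vc]) auto
    show "0 \<le> k * Lq x * norm (V x)" for x using k0 Lq0 by simp
    fix x assume x: "x \<in> {0..s}" "x \<notin> N"
    have xT: "x \<in> {0..<T}" using x s t by auto
    obtain \<theta>' where d: "(\<theta> has_vector_derivative \<theta>') (at x)" and b: "norm (fst \<theta>') \<le> k * Lq x * norm (V x)"
      using derb[OF xT x(2)] by blast
    show "\<exists>f'. (W has_vector_derivative f') (at x) \<and> norm f' \<le> k * Lq x * norm (V x)"
      unfolding W_def by (intro exI[of _ "fst \<theta>'"] conjI hvd_fst[OF d] b)
  qed
  have mV: "norm (V s - V 0) \<le> integral {0..s} (\<lambda>r. k * Lq r * norm (W r))" if s: "s \<in> {0..t}" for s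
  proof (rule ac_mvi[OF _ _ N])
    show "0 \<le> s" using s by auto
    show "abs_continuous_on 0 s V" unfolding V_def using acs[OF s] sndlip by (rule ac_comp)
    show "continuous_on {0..s} (\<lambda>r. k * Lq r * norm (W r))" using s
      by (intro continuous_intros continuous_on_subset[OF Lqc] continuous_on_subset[OF Wc]) auto
    show "0 \<le> k * Lq x * norm (W x)" for x using k0 Lq0 by simp
    fix x assume x: "x \<in> {0..s}" "x \<notin> N"
    have xT: "x \<in> {0..<T}" using x s t by auto
    obtain \<theta>' where d: "(\<theta> has_vector_derivative \<theta>') (at x)" and b: "norm (snd \<theta>') \<le> k * Lq x * norm (W x)"
      using derb[OF xT x(2)] by blast
    show "\<exists>f'. (V has_vector_derivative f') (at x) \<and> norm f' \<le> k * Lq x * norm (W x)"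
      unfolding V_def by (intro exI[of _ "snd \<theta>'"] conjI hvd_snd[OF d] b)
  qed
  define p where "p = (\<lambda>r. norm (W r) + norm (V r))"
  define \<beta> where "\<beta> = (\<lambda>r. k * Lq r)"
  have pc: "continuous_on {0..t} p" unfolding p_def by (intro continuous_intros Wc Vc)
  have \<beta>c: "continuous_on {0..t} \<beta>" unfolding \<beta>_def by (intro continuous_intros Lqc)
  have \<beta>0: "0 \<le> \<beta> r" for r unfolding \<beta>_def using k0 Lq0 by simp
  have \<beta>pc: "continuous_on {0..t} (\<lambda>r. \<beta> r * p r)" by (intro continuous_intros \<beta>c pc)
  have \<beta>p_eq: "(\<lambda>r. \<beta> r * p r) = (\<lambda>r. k * Lq r * norm (V r) + k * Lq r * norm (W r))"
    by (simp add: fun_eq_iff \<beta>_def p_def algebra_simps)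
  have mtheta: "norm (\<theta> t - \<theta> 0) \<le> integral {0..t} (\<lambda>r. \<beta> r * p r)"
  proof (rule ac_mvi[OF t(1) acs N])
    show "t \<in> {0..t}" using t by auto
    show "continuous_on {0..t} (\<lambda>r. \<beta> r * p r)" by (rule \<beta>pc)
    show "0 \<le> \<beta> x * p x" for x using \<beta>0[of x] by (simp add: p_def)
    fix x assume x: "x \<in> {0..t}" "x \<notin> N"
    have xT: "x \<in> {0..<T}" using x t by auto
    obtain \<theta>' where d: "(\<theta> has_vector_derivative \<theta>') (at x)" and
      b1: "norm (fst \<theta>') \<le> k * Lq x * norm (V x)" and b2: "norm (snd \<theta>') \<le> k * Lq x * norm (W x)"
      using derb[OF xT x(2)] by blast
    have "norm \<theta>' \<le> norm (fst \<theta>') + norm (snd \<theta>')"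
      using norm_Pair_le[of "fst \<theta>'" "snd \<theta>'"] by simp
    also have "\<dots> \<le> \<beta> x * p x" using b1 b2 by (simp add: \<beta>_def p_def algebra_simps)
    finally show "\<exists>f'. (\<theta> has_vector_derivative f') (at x) \<and> norm f' \<le> \<beta> x * p x" using d by blast
  qed
  have int_split: "integral {0..s} (\<lambda>r. \<beta> r * p r)
      = integral {0..s} (\<lambda>r. k * Lq r * norm (V r)) + integral {0..s} (\<lambda>r. k * Lq r * norm (W r))"
    if s: "s \<in> {0..t}" for s
    unfolding \<beta>p_eq using s
    by (intro integral_add integrable_continuous_real continuous_intros
        continuous_on_subset[OF Lqc] continuous_on_subset[OF Vc] continuous_on_subset[OF Wc]) auto
  have pint: "p s \<le> p 0 + integral {0..s} (\<lambda>r. \<beta> r * p r)" if s: "s \<in> {0..t}" for s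
  proof -
    have "norm (W s) \<le> norm (W 0) + norm (W s - W 0)" by (rule norm_triangle_sub)
    moreover have "norm (V s) \<le> norm (V 0) + norm (V s - V 0)" by (rule norm_triangle_sub)
    ultimately show ?thesis using mW[OF s] mV[OF s] int_split[OF s] unfolding p_def by linarith
  qed
  have p0: "0 \<le> p r" for r unfolding p_def by simp
  have S0: "0 \<le> S r" if "r \<in> {0..t}" for r unfolding S_def using that Lq0
    by (intro int_nonneg) (auto intro: continuous_on_subset[OF Lqc])
  have Smono: "S r \<le> S s" if "r \<le> s" "s \<le> t" for r s
    unfolding S_def using that Lq0 by (intro int_mono[OF Lqc]) auto
  have pbound: "p s \<le> p 0 * exp (k * S s)" if s: "s \<in> {0..t}" for s
  proof -
    define Q where "Q = (\<lambda>s. p 0 + integral {0..s} (\<lambda>r. \<beta> r * p r))"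
    have "Q s \<le> exp (integral {0..s} \<beta>) * (Q 0 + integral {0..s} (\<lambda>_. 0))"
    proof (rule gronwall_lin)
      show "0 \<le> s" using s by auto
      show "continuous_on {0..s} Q" unfolding Q_def using s
        by (intro continuous_intros int_cont continuous_on_subset[OF \<beta>pc]) auto
      show "continuous_on {0..s} (\<lambda>_. 0::real)" by simp
      show "continuous_on {0..s} \<beta>" using s by (intro continuous_on_subset[OF \<beta>c]) auto
      show "0 \<le> (0::real)" for r :: real by simp
      show "0 \<le> \<beta> r" for r by (rule \<beta>0)
      fix r assume r: "r \<in> {0<..<s}"
      have "(Q has_real_derivative \<beta> r * p r) (at r)" unfolding Q_def using r s
        by (intro DERIV_add_const int_deriv[where t=s] continuous_on_subset[OF \<beta>pc]) auto
      moreover have "\<beta> r * p r \<le> 0 + \<beta> r * Q r"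
        using pint[of r] r s \<beta>0[of r] unfolding Q_def by (simp add: mult_left_mono)
      ultimately show "\<exists>P'. (Q has_real_derivative P') (at r) \<and> P' \<le> 0 + \<beta> r * Q r" by blast
    qed
    moreover have "integral {0..s} \<beta> = k * S s" unfolding \<beta>_def S_def by simp
    moreover have "Q 0 = p 0" unfolding Q_def by simp
    moreover have "p s \<le> Q s" using pint[OF s] unfolding Q_def by simp
    ultimately show ?thesis by (simp add: mult.commute)
  qed
  have part1: "norm (\<theta> t - \<theta> 0) \<le> k * p 0 * S t * exp (k * S t)"
  proof -
    have "integral {0..t} (\<lambda>r. \<beta> r * p r) \<le> integral {0..t} (\<lambda>r. \<beta> r * (p 0 * exp (k * S t)))"
    proof (rule int_le)
      show "continuous_on {0..t} (\<lambda>r. \<beta> r * p r)" by (rule \<beta>pc)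
      show "continuous_on {0..t} (\<lambda>r. \<beta> r * (p 0 * exp (k * S t)))" by (intro continuous_intros \<beta>c)
      fix r assume r: "r \<in> {0..t}"
      have "p r \<le> p 0 * exp (k * S r)" by (rule pbound[OF r])
      also have "\<dots> \<le> p 0 * exp (k * S t)"
        using Smono[of r t] r k0 p0[of 0] by (intro mult_left_mono) (auto intro: mult_left_mono)
      finally show "\<beta> r * p r \<le> \<beta> r * (p 0 * exp (k * S t))" using \<beta>0[of r] by (rule mult_left_mono)
    qed
    also have "\<dots> = k * p 0 * S t * exp (k * S t)" unfolding \<beta>_def S_def
      by (simp add: mult_ac)
    finally show ?thesis using mtheta by simp
  qed
  define w where "w = (\<lambda>r. norm (W r - W 0))"
  define v where "v = (\<lambda>r. norm (V r - V 0))"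
  define W0 where "W0 = norm (W 0)"
  define V0 where "V0 = norm (V 0)"
  have wc: "continuous_on {0..t} w" unfolding w_def by (intro continuous_intros Wc)
  have vc: "continuous_on {0..t} v" unfolding v_def by (intro continuous_intros Vc)
  define fP where "fP = (\<lambda>r. k * Lq r * (V0 + v r))"
  define fQ where "fQ = (\<lambda>r. k * Lq r * (W0 + w r))"
  have fPc: "continuous_on {0..t} fP" unfolding fP_def by (intro continuous_intros Lqc vc)
  have fQc: "continuous_on {0..t} fQ" unfolding fQ_def by (intro continuous_intros Lqc wc)
  have fP0: "0 \<le> fP r" for r unfolding fP_def V0_def v_def using k0 Lq0[of r] by simp
  have fQ0: "0 \<le> fQ r" for r unfolding fQ_def W0_def w_def using k0 Lq0[of r] by simp
  define P where "P = (\<lambda>s. integral {0..s} fP)"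
  define Q where "Q = (\<lambda>s. integral {0..s} fQ)"
  have wP: "w s \<le> P s" if s: "s \<in> {0..t}" for s
  proof -
    have "integral {0..s} (\<lambda>r. k * Lq r * norm (V r)) \<le> P s" unfolding P_def
    proof (rule int_le)
      show "continuous_on {0..s} (\<lambda>r. k * Lq r * norm (V r))" using s
        by (intro continuous_intros continuous_on_subset[OF Lqc] continuous_on_subset[OF Vc]) auto
      show "continuous_on {0..s} fP" using s by (intro continuous_on_subset[OF fPc]) auto
      fix r
      have "norm (V r) \<le> V0 + v r" unfolding V0_def v_def by (rule norm_triangle_sub)
      then show "k * Lq r * norm (V r) \<le> fP r" unfolding fP_def using k0 Lq0[of r]
        by (intro mult_left_mono) auto
    qed
    then show ?thesis using mW[OF s] unfolding w_def by simp
  qed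
  have vQ: "v s \<le> Q s" if s: "s \<in> {0..t}" for s
  proof -
    have "integral {0..s} (\<lambda>r. k * Lq r * norm (W r)) \<le> Q s" unfolding Q_def
    proof (rule int_le)
      show "continuous_on {0..s} (\<lambda>r. k * Lq r * norm (W r))" using s
        by (intro continuous_intros continuous_on_subset[OF Lqc] continuous_on_subset[OF Wc]) auto
      show "continuous_on {0..s} fQ" using s by (intro continuous_on_subset[OF fQc]) auto
      fix r
      have "norm (W r) \<le> W0 + w r" unfolding W0_def w_def by (rule norm_triangle_sub)
      then show "k * Lq r * norm (W r) \<le> fQ r" unfolding fQ_def using k0 Lq0[of r]
        by (intro mult_left_mono) auto
    qed
    then show ?thesis using mV[OF s] unfolding v_def by simp
  qed
  have Pmono: "P r \<le> P s" if "r \<le> s" "s \<le> t" for r s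
    unfolding P_def using that fP0 by (intro int_mono[OF fPc]) auto
  have Qb: "Q s \<le> k * S s * (W0 + P s)" if s: "s \<in> {0..t}" for s
  proof -
    have "Q s \<le> integral {0..s} (\<lambda>r. (k * (W0 + P s)) * Lq r)" unfolding Q_def
    proof (rule int_le)
      show "continuous_on {0..s} fQ" using s by (intro continuous_on_subset[OF fQc]) auto
      show "continuous_on {0..s} (\<lambda>r. (k * (W0 + P s)) * Lq r)" using s
        by (intro continuous_intros continuous_on_subset[OF Lqc]) auto
      fix r assume r: "r \<in> {0..s}"
      have "w r \<le> P s" using wP[of r] Pmono[of r s] r s by auto
      then have "Lq r * (W0 + w r) \<le> Lq r * (W0 + P s)" using Lq0[of r] by (intro mult_left_mono) auto
      then have "k * (Lq r * (W0 + w r)) \<le> k * (Lq r * (W0 + P s))" using k0 by (rule mult_left_mono)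
      then show "fQ r \<le> (k * (W0 + P s)) * Lq r" unfolding fQ_def by (simp add: mult_ac)
    qed
    also have "\<dots> = k * S s * (W0 + P s)" unfolding S_def by (simp add: mult_ac)
    finally show ?thesis .
  qed
  define a where "a = (\<lambda>r. (k * V0) * Lq r + (k^2 * W0) * (Lq r * S r))"
  define b where "b = (\<lambda>r. k^2 * (Lq r * S r))"
  have Sc: "continuous_on {0..t} S" unfolding S_def by (rule int_cont[OF Lqc])
  have LSc: "continuous_on {0..t} (\<lambda>r. Lq r * S r)" by (intro continuous_intros Lqc Sc)
  have Pt: "P t \<le> exp (integral {0..t} b) * (P 0 + integral {0..t} a)"
  proof (rule gronwall_lin[OF t(1)])
    show "continuous_on {0..t} P" unfolding P_def by (rule int_cont[OF fPc])
    show "continuous_on {0..t} a" unfolding a_def by (intro continuous_intros Lqc LSc)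
    show "continuous_on {0..t} b" unfolding b_def by (intro continuous_intros LSc)
    show "0 \<le> a r" if "r \<in> {0..t}" for r
      unfolding a_def using k0 Lq0[of r] S0[OF that] by (simp add: V0_def W0_def)
    show "0 \<le> b r" if "r \<in> {0..t}" for r
      unfolding b_def using Lq0[of r] S0[OF that] by simp
    fix r assume r: "r \<in> {0<..<t}"
    have rr: "r \<in> {0..t}" using r by auto
    have "(P has_real_derivative fP r) (at r)" unfolding P_def using r by (intro int_deriv[OF fPc])
    moreover have "fP r \<le> a r + b r * P r"
    proof -
      have "V0 + v r \<le> V0 + k * S r * (W0 + P r)" using vQ[OF rr] Qb[OF rr] by simp
      then have "fP r \<le> k * Lq r * (V0 + k * S r * (W0 + P r))"
        unfolding fP_def using k0 Lq0[of r] by (intro mult_left_mono) auto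
      also have "\<dots> = a r + b r * P r" unfolding a_def b_def by (simp add: algebra_simps power2_eq_square)
      finally show ?thesis .
    qed
    ultimately show "\<exists>P'. (P has_real_derivative P') (at r) \<and> P' \<le> a r + b r * P r" by blast
  qed
  have ILS: "integral {0..t} (\<lambda>r. Lq r * S r) = (S t)\<^sup>2 / 2"
  proof -
    have "((\<lambda>r. (Lq r * S r + Lq r * S r) / 2) has_integral (S t * S t / 2 - S 0 * S 0 / 2)) {0..t}"
    proof (rule fundamental_theorem_of_calculus_interior_strong[where S="{}"])
      show "finite ({}::real set)" by simp
      show "0 \<le> t" by (rule t(1))
      show "continuous_on {0..t} (\<lambda>r. S r * S r / 2)" by (intro continuous_intros Sc) auto
      fix r assume r: "r \<in> {0<..<t} - {}"
      have dS: "(S has_real_derivative Lq r) (at r)" unfolding S_def using r by (intro int_deriv[OF Lqc]) auto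
      have "((\<lambda>r. S r * S r / 2) has_real_derivative (Lq r * S r + Lq r * S r) / 2) (at r)"
        by (intro DERIV_cdivide DERIV_mult[OF dS dS])
      then show "((\<lambda>r. S r * S r / 2) has_vector_derivative (Lq r * S r + Lq r * S r) / 2) (at r)"
        by (simp add: has_real_derivative_iff_has_vector_derivative)
    qed
    moreover have "(\<lambda>r. (Lq r * S r + Lq r * S r) / 2) = (\<lambda>r. Lq r * S r)" by (simp add: fun_eq_iff)
    moreover have "S 0 = 0" unfolding S_def by simp
    ultimately show ?thesis by (simp add: integral_unique power2_eq_square)
  qed
  have Ib: "integral {0..t} b = k^2 * (S t)\<^sup>2 / 2" unfolding b_def using ILS by simp
  have Ia: "integral {0..t} a = k * V0 * S t + k^2 * W0 * (S t)\<^sup>2 / 2"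
  proof -
    have "integral {0..t} a = integral {0..t} (\<lambda>r. (k * V0) * Lq r) + integral {0..t} (\<lambda>r. (k^2 * W0) * (Lq r * S r))"
      unfolding a_def by (intro integral_add integrable_continuous_real continuous_intros Lqc LSc)
    also have "\<dots> = k * V0 * S t + k^2 * W0 * (S t)\<^sup>2 / 2" using ILS unfolding S_def by simp
    finally show ?thesis .
  qed
  have P0: "P 0 = 0" unfolding P_def by simp
  have wt: "w t \<le> exp (k^2 * (S t)\<^sup>2 / 2) * (k * V0 * S t + k^2 * W0 * (S t)\<^sup>2 / 2)"
    using wP[of t] t Pt Ib Ia P0 by simp
  have k2: "k^2 = 2 * u^2" unfolding k_def by (simp add: power_mult_distrib)
  have "u * w t \<le> u * (exp (k^2 * (S t)\<^sup>2 / 2) * (k * V0 * S t + k^2 * W0 * (S t)\<^sup>2 / 2))"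
    using wt u0 by (rule mult_left_mono)
  also have "\<dots> = (1/2) * (2 * sqrt 2 * u\<^sup>2 * V0 * S t + 2 * u^3 * W0 * (S t)\<^sup>2) * exp (u\<^sup>2 * (S t)\<^sup>2)"
    unfolding k2 by (simp add: k_def algebra_simps power2_eq_square power3_eq_cube)
  finally have part2: "u * w t \<le> (1/2) * (2 * sqrt 2 * u\<^sup>2 * V0 * S t + 2 * u^3 * W0 * (S t)\<^sup>2) * exp (u\<^sup>2 * (S t)\<^sup>2)" .
  show ?thesis
    using part1 part2 unfolding u_def k_def p_def w_def S_def Lq_def W_def V_def W0_def V0_def
    by (simp add: mult_ac)
qed


end
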